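(* Consider the discounted repeated power control game with discount factor $\lambda\in(0,1)$ described in the context. Assume that for every $i\in\mathcal{K}$, $$\lambda\le\frac{\eta_i^{\min}\delta(\beta^*,\tilde\gamma)}{\eta_i^{\min}\delta(\beta^*,\tilde\gamma)+\eta_i^{\max}\left[(K-1)f(\beta^* )-\delta(\beta^*,\tilde\gamma)\right]},$$ where $\delta(\beta^*,\tilde\gamma)=\frac{1-(K-1)\tilde\gamma}{\tilde\gamma}f(\tilde\gamma)-\frac{1-(K-1)\beta^*}{\beta^*}f(\beta^* )$. Then, for any distribution of the channel gains, the joint strategy in which each transmitter $i$ plays at stage $t$ the power $\tilde p_i(t)$ as long as all the other players have played the operating point powers $\tilde{\underline{p}}_{-i}$, and the one-shot Nash equilibrium power $p_i^*(t)$ otherwise, is a subgame perfect Nash equilibrium of the discounted repeated game.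
   Context: There are $K\ge2$ transmitters $i\in\mathcal{K}=\{1,\dots,K\}$; $\sigma^2>0$ is the noise variance; transmitter $i$ has rate $R_i>0$ and power set $[0,P_i^{\max}]$. At each stage $t$ transmitter $i$ has channel gain $g_i(t)$ with $|g_i(t)|^2\in[\eta_i^{\min},\eta_i^{\max}]$, $0<\eta_i^{\min}\le\eta_i^{\max}$ (random, with arbitrary distribution; transmitter $i$ knows its own current gain). For a power profile $\underline{p}$, $\mathrm{SINR}_i=\frac{p_i|g_i|^2}{\sum_{j\neq i}p_j|g_j|^2+\sigma^2}$ and the stage utility is $u_i(\underline{p})=\frac{R_i f(\mathrm{SINR}_i)}{p_i}$, with $f$ a common sigmoidal efficiency function, $f(0)=0$. $\beta^*$ is the unique positive solution of $xf'(x)-f(x)=0$ (with $(K-1)\beta^*<1$) and $p_i^*(t)=\frac{\sigma^2}{|g_i(t)|^2}\frac{\beta^*}{1-(K-1)\beta^*}$ is the one-shot Nash equilibrium power. It is assumed that there exists $x_0\in]0,\frac1{K-1}[$ with $\frac{f''(x)}{f'(x)}-\frac{2(K-1)}{1-(K-1)x}$ strictly positive on $]0,x_0[$ and strictly negative on $]x_0,\frac1{K-1}[$; $\tilde\gamma$ is the unique solution in $]0,\frac1{K-1}[$ of $x[1-(K-1)x]f'(x)-f(x)=0$, and the operating point powers are $\tilde p_i(t)=\frac{\sigma^2}{|g_i(t)|^2}\frac{\tilde\gamma}{1-(K-1)\tilde\gamma}$. Powers $p_i^*,\tilde p_i$ lie in $[0,P_i^{\max}]$. At each stage every transmitter observes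 the public signal $\omega(t)=\sigma^2+\sum_{i=1}^K|g_i(t)|^2p_i(t)$ (deviations from the operating point are detected through it). A pure strategy of transmitter $i$ is a sequence of maps $\tau_{i,t}$ from histories $(\omega(1),\dots,\omega(t-1),p_i(1),\dots,p_i(t-1))$ (together with the current own channel gain) to $[0,P_i^{\max}]$. The payoff of transmitter $i$ is the (expected) discounted sum $v_i^\lambda(\underline\tau)=\sum_{t=1}^\infty\lambda(1-\lambda)^{t-1}u_i(\underline{p}(t))$, where $\underline{p}(t)$ is the profile induced by $\underline\tau$. A joint strategy is a Nash equilibrium if no transmitter can increase its payoff by unilaterally deviating; it is subgame perfect if it induces a Nash equilibrium after every possible history. *)

theory Defs
  imports "HOL-Analysis.Analysis"
begin

text \<open>Transmitters are the naturals i < K.  A power profile / gain vector is a function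
  nat => real; G t i stands for the squared channel modulus |g_i(t)|^2 at stage t
  (stages are indexed from 0).\<close>

definition sigmoidal :: "(real \<Rightarrow> real) \<Rightarrow> bool" where
  "sigmoidal f \<longleftrightarrow> f 0 = 0 \<and> continuous_on {0..} f \<and> strict_mono_on {0..} f \<and>
     (f \<longlongrightarrow> 1) at_top \<and> (\<exists>c>0. convex_on {0..c} f \<and> concave_on {c..} f)"

definition SINR :: "nat \<Rightarrow> real \<Rightarrow> (nat \<Rightarrow> real) \<Rightarrow> (nat \<Rightarrow> real) \<Rightarrow> nat \<Rightarrow> real" where
  "SINR K \<sigma>2 h p i = p i * h i / ((\<Sum>j\<in>{..<K} - {i}. p j * h j) + \<sigma>2)"

definition utility :: "nat \<Rightarrow> real \<Rightarrow> (real \<Rightarrow> real) \<Rightarrow> (nat \<Rightarrow> real) \<Rightarrow> (nat \<Rightarrow> real)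
    \<Rightarrow> (nat \<Rightarrow> real) \<Rightarrow> nat \<Rightarrow> real" where
  "utility K \<sigma>2 f R h p i = R i * f (SINR K \<sigma>2 h p i) / p i"

definition signal :: "nat \<Rightarrow> real \<Rightarrow> (nat \<Rightarrow> real) \<Rightarrow> (nat \<Rightarrow> real) \<Rightarrow> real" where
  "signal K \<sigma>2 h p = \<sigma>2 + (\<Sum>j<K. h j * p j)"

text \<open>A pure strategy: stage t, past public signals, own past powers, current own gain.\<close>
type_synonym strategy = "nat \<Rightarrow> real list \<Rightarrow> real list \<Rightarrow> real \<Rightarrow> real"

text \<open>History (signals, own powers of every player) after m further stages of play,
  starting from the initial history h0.\<close>
fun history :: "nat \<Rightarrow> real \<Rightarrow> (nat \<Rightarrow> strategy) \<Rightarrow> (nat \<Rightarrow> nat \<Rightarrow> real)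
    \<Rightarrow> real list \<times> (nat \<Rightarrow> real list) \<Rightarrow> nat \<Rightarrow> real list \<times> (nat \<Rightarrow> real list)" where
  "history K \<sigma>2 \<tau> G h0 0 = h0"
| "history K \<sigma>2 \<tau> G h0 (Suc m) =
     (let (ws, ps) = history K \<sigma>2 \<tau> G h0 m; t = length ws;
          p = (\<lambda>i. \<tau> i t ws (ps i) (G t i))
      in (ws @ [signal K \<sigma>2 (G t) p], \<lambda>i. ps i @ [p i]))"

definition profile :: "nat \<Rightarrow> real \<Rightarrow> (nat \<Rightarrow> strategy) \<Rightarrow> (nat \<Rightarrow> nat \<Rightarrow> real)
    \<Rightarrow> real list \<times> (nat \<Rightarrow> real list) \<Rightarrow> nat \<Rightarrow> nat \<Rightarrow> real" where
  "profile K \<sigma>2 \<tau> G h0 m =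
     (let (ws, ps) = history K \<sigma>2 \<tau> G h0 m; t = length ws in (\<lambda>i. \<tau> i t ws (ps i) (G t i)))"

definition payoff :: "nat \<Rightarrow> real \<Rightarrow> (real \<Rightarrow> real) \<Rightarrow> (nat \<Rightarrow> real) \<Rightarrow> real
    \<Rightarrow> (nat \<Rightarrow> strategy) \<Rightarrow> (nat \<Rightarrow> nat \<Rightarrow> real) \<Rightarrow> real list \<times> (nat \<Rightarrow> real list) \<Rightarrow> nat \<Rightarrow> real" where
  "payoff K \<sigma>2 f R lam \<tau> G h0 i =
     (\<Sum>m. lam * (1 - lam) ^ m *
        utility K \<sigma>2 f R (G (length (fst h0) + m)) (profile K \<sigma>2 \<tau> G h0 m) i)"

definition past_history :: "nat \<Rightarrow> real \<Rightarrow> (nat \<Rightarrow> nat \<Rightarrow> real) \<Rightarrow> (nat \<Rightarrow> nat \<Rightarrow> real) \<Rightarrow> nat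
    \<Rightarrow> real list \<times> (nat \<Rightarrow> real list)" where
  "past_history K \<sigma>2 G q n =
     (map (\<lambda>s. signal K \<sigma>2 (G s) (q s)) [0..<n], \<lambda>i. map (\<lambda>s. q s i) [0..<n])"

definition valid_strategy :: "(nat \<Rightarrow> real) \<Rightarrow> (nat \<Rightarrow> real) \<Rightarrow> (nat \<Rightarrow> real) \<Rightarrow> nat \<Rightarrow> strategy \<Rightarrow> bool" where
  "valid_strategy Pmax \<eta>min \<eta>max i s \<longleftrightarrow>
     (\<forall>t ws ps h. \<eta>min i \<le> h \<and> h \<le> \<eta>max i \<longrightarrow> 0 \<le> s t ws ps h \<and> s t ws ps h \<le> Pmax i)"

definition admissible_gains :: "nat \<Rightarrow> (nat \<Rightarrow> real) \<Rightarrow> (nat \<Rightarrow> real) \<Rightarrow> (nat \<Rightarrow> nat \<Rightarrow> real) \<Rightarrow> bool" where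
  "admissible_gains K \<eta>min \<eta>max G \<longleftrightarrow> (\<forall>t. \<forall>i<K. \<eta>min i \<le> G t i \<and> G t i \<le> \<eta>max i)"

text \<open>The comparison is made for every realization of the channel gains.\<close>
definition subgame_perfect :: "nat \<Rightarrow> real \<Rightarrow> (real \<Rightarrow> real) \<Rightarrow> (nat \<Rightarrow> real) \<Rightarrow> (nat \<Rightarrow> real)
    \<Rightarrow> (nat \<Rightarrow> real) \<Rightarrow> (nat \<Rightarrow> real) \<Rightarrow> real \<Rightarrow> (nat \<Rightarrow> strategy) \<Rightarrow> bool" where
  "subgame_perfect K \<sigma>2 f R Pmax \<eta>min \<eta>max lam \<tau> \<longleftrightarrow>
     (\<forall>i<K. valid_strategy Pmax \<eta>min \<eta>max i (\<tau> i)) \<and>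
     (\<forall>G. admissible_gains K \<eta>min \<eta>max G \<longrightarrow>
        (\<forall>n q. (\<forall>s<n. \<forall>i<K. 0 \<le> q s i \<and> q s i \<le> Pmax i) \<longrightarrow>
          (\<forall>i<K. \<forall>s. valid_strategy Pmax \<eta>min \<eta>max i s \<longrightarrow>
             payoff K \<sigma>2 f R lam (\<tau>(i := s)) G (past_history K \<sigma>2 G q n) i
               \<le> payoff K \<sigma>2 f R lam \<tau> G (past_history K \<sigma>2 G q n) i)))"

text \<open>The trigger strategy: play the operating point as long as every past public signal
  equals the (gain independent) signal of the operating point, the one-shot Nash power otherwise.\<close>
definition trigger :: "nat \<Rightarrow> real \<Rightarrow> real \<Rightarrow> real \<Rightarrow> nat \<Rightarrow> strategy" where
  "trigger K \<sigma>2 \<beta> \<gamma> i t ws ps h =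
     (if (\<forall>w\<in>set ws. w = \<sigma>2 + (\<Sum>j<K. \<sigma>2 * (\<gamma> / (1 - (real K - 1) * \<gamma>))))
      then \<sigma>2 / h * (\<gamma> / (1 - (real K - 1) * \<gamma>))
      else \<sigma>2 / h * (\<beta> / (1 - (real K - 1) * \<beta>)))"

end

theory Submission
  imports Defs
begin


lemma fprime_nonneg:
  assumes sig: "sigmoidal f" and d: "(f has_real_derivative D) (at x)" and x: "x > 0"
  shows "D \<ge> 0"
proof -
  have "mono_on {0..} f" using sig unfolding sigmoidal_def by (auto intro: strict_mono_on_imp_mono_on)
  moreover have "x \<in> interior {0..}" using x by simp
  ultimately show ?thesis using mono_on_imp_deriv_nonneg d by blast
qed

lemma sign_const:
  fixes \<phi> :: "real \<Rightarrow> real"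
  assumes cont: "\<And>x. a < x \<Longrightarrow> x < b \<Longrightarrow> isCont \<phi> x"
    and nz: "\<And>x. a < x \<Longrightarrow> x < b \<Longrightarrow> \<phi> x \<noteq> 0"
    and u: "a < u" "u < b" and v: "a < v" "v < b" and pu: "\<phi> u > 0"
  shows "\<phi> v > 0"
proof (rule ccontr)
  assume "\<not> \<phi> v > 0"
  hence pv: "\<phi> v \<le> 0" by simp
  show False
  proof (cases "u \<le> v")
    case True
    from IVT2[of \<phi> v 0 u] pv pu True cont u v obtain z where "u \<le> z" "z \<le> v" "\<phi> z = 0"
      by (metis dual_order.strict_trans1 dual_order.strict_trans2 less_eq_real_def)
    then show False using nz u v by force
  next
    case False
    from IVT[of \<phi> v 0 u] pv pu False cont u v obtain z where "v \<le> z" "z \<le> u" "\<phi> z = 0"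
      by (metis dual_order.strict_trans1 dual_order.strict_trans2 less_eq_real_def nle_le)
    then show False using nz u v by force
  qed
qed



lemma ratio_max:
  fixes f f' f'' :: "real \<Rightarrow> real" and \<beta> :: real
  assumes sig: "sigmoidal f"
    and d1: "\<forall>x>0. (f has_real_derivative f' x) (at x)"
    and d2: "\<forall>x>0. (f' has_real_derivative f'' x) (at x)"
    and beta: "\<beta> > 0" "\<beta> * f' \<beta> - f \<beta> = 0" "\<forall>x>0. x * f' x - f x = 0 \<longrightarrow> x = \<beta>"
  shows "f \<beta> > 0" "\<And>x. x > 0 \<Longrightarrow> f x / x \<le> f \<beta> / \<beta>"
proof -
  define \<psi> where "\<psi> x = x * f' x - f x" for x
  have f0: "f 0 = 0" and smono: "strict_mono_on {0..} f" and lim: "(f \<longlongrightarrow> 1) at_top"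
    and cvx: "\<exists>c>0. convex_on {0..c} f \<and> concave_on {c..} f" using sig unfolding sigmoidal_def by auto
  show fb: "f \<beta> > 0" using smono beta(1) f0 by (metis atLeast_iff order.refl less_imp_le strict_mono_onD)
  have contpsi: "isCont \<psi> x" if "x > 0" for x
    unfolding \<psi>_def using d1 d2 that
    by (intro continuous_intros) (auto intro: DERIV_isCont)
  have dm: "((\<lambda>x. f x / x) has_real_derivative \<psi> x / x\<^sup>2) (at x)" if x: "x > 0" for x
    using d1 x unfolding \<psi>_def
    by (auto intro!: derivative_eq_intros simp: field_simps power2_eq_square)
  have contm: "continuous_on {a..b} (\<lambda>x. f x / x)" if "a > 0" for a b
    by (rule continuous_at_imp_continuous_on) (use dm that in \<open>meson DERIV_isCont order_less_le_trans atLeastAtMost_iff\<close>)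
  obtain c where c: "c > 0" "convex_on {0..c} f" using cvx by blast
  define x1 where "x1 = min c \<beta> / 2"
  have x1: "0 < x1" "x1 < c" "x1 < \<beta>" using c beta(1) unfolding x1_def by auto
  have "f 0 - f x1 \<ge> f' x1 * (0 - x1)"
  proof (rule convex_on_imp_above_tangent[OF c(2)])
    show "connected {0..c}" by simp
    show "x1 \<in> interior {0..c}" using x1 by simp
    show "0 \<in> {0..c}" using c by simp
    show "(f has_field_derivative f' x1) (at x1 within {0..c})"
      using d1 x1 by (auto intro: has_field_derivative_at_within)
  qed
  hence "\<psi> x1 \<ge> 0" using f0 unfolding \<psi>_def by (simp add: mult.commute)
  moreover have "\<psi> x1 \<noteq> 0" using beta(3) x1 unfolding \<psi>_def by force
  ultimately have px1: "\<psi> x1 > 0" by simp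
  have nzpos: "\<psi> x \<noteq> 0" if "0 < x" "x < \<beta>" for x using beta(3) that unfolding \<psi>_def by force
  have pos: "\<psi> v > 0" if "0 < v" "v < \<beta>" for v
    by (rule sign_const[of 0 \<beta> \<psi> x1]) (use contpsi nzpos x1 px1 that in auto)
  obtain N where N: "\<And>x. x \<ge> N \<Longrightarrow> f x < 2"
    using order_tendstoD(2)[OF lim, of 2] by (auto simp: eventually_at_top_linorder)
  define X where "X = max N (max (\<beta>+1) (2*\<beta>/f \<beta> + 1))"
  have X: "X > \<beta>" "X > 2*\<beta>/f \<beta>" "f X < 2" using N unfolding X_def by auto
  have ineqX: "f X / X < f \<beta> / \<beta>"
  proof -
    have "2 * \<beta> < f \<beta> * X" using X(2) fb by (simp add: field_simps)
    moreover have "f X * \<beta> < 2 * \<beta>" using X(3) beta(1) by (intro mult_strict_right_mono) auto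
    ultimately have "f X * \<beta> < f \<beta> * X" by linarith
    thus ?thesis using X(1) beta(1) by (simp add: field_simps)
  qed
  have difm: "(\<lambda>x. f x / x) differentiable (at x)" if "x > 0" for x
    using dm[OF that] real_differentiable_def by blast
  have mvt: "\<exists>l z. \<beta> < z \<and> z < X \<and> DERIV (\<lambda>x. f x / x) z :> l \<and>
      f X / X - f \<beta> / \<beta> = (X - \<beta>) * l"
    by (rule MVT[OF X(1) contm[OF beta(1)]], rule difm) (use beta(1) in linarith)
  obtain l z where lz: "\<beta> < z" "z < X" "DERIV (\<lambda>x. f x / x) z :> l"
      "f X / X - f \<beta> / \<beta> = (X - \<beta>) * l"
    using mvt by blast
  have "(X - \<beta>) * l < 0" using ineqX lz(4) by linarith
  hence "l < 0" using X(1) by (simp add: mult_less_0_iff)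
  moreover have "z > 0" using lz(1) beta(1) by linarith
  hence "l = \<psi> z / z\<^sup>2" using DERIV_unique[OF lz(3) dm] by blast
  ultimately have "\<psi> z / z\<^sup>2 < 0" by simp
  hence pz: "\<psi> z < 0" by (simp add: divide_less_0_iff)
  have neg: "\<psi> v < 0" if "\<beta> < v" for v
  proof -
    have nz: "\<psi> x \<noteq> 0" if "\<beta> < x" for x
    proof
      assume "\<psi> x = 0"
      moreover have "x > 0" using that beta(1) by linarith
      ultimately have "x = \<beta>" using beta(3) unfolding \<psi>_def by blast
      thus False using that by simp
    qed
    have "(\<lambda>x. - \<psi> x) v > 0"
    proof (rule sign_const[of \<beta> "max z v + 1" "\<lambda>x. - \<psi> x" z v])
      show "isCont (\<lambda>x. - \<psi> x) x" if "\<beta> < x" for x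
        using contpsi[of x] beta(1) that by (intro continuous_intros) auto
      show "- \<psi> x \<noteq> 0" if "\<beta> < x" for x using nz[OF that] by simp
      show "\<beta> < z" by (fact lz(1))
      show "z < max z v + 1" by simp
      show "\<beta> < v" by (fact that)
      show "v < max z v + 1" by simp
      show "- \<psi> z > 0" using pz by simp
    qed
    thus ?thesis by simp
  qed
  show "f x / x \<le> f \<beta> / \<beta>" if x: "x > 0" for x
  proof (cases x \<beta> rule: linorder_cases)
    case less
    have "f x / x < f \<beta> / \<beta>"
    proof (rule DERIV_pos_imp_increasing_open[OF less _ contm[OF x]])
      fix y assume y: "x < y" "y < \<beta>"
      hence "y > 0" using x by linarith
      thus "\<exists>d. DERIV (\<lambda>x. f x / x) y :> d \<and> d > 0"
        using dm pos y by (intro exI[of _ "\<psi> y / y\<^sup>2"]) simp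
    qed
    thus ?thesis by simp
  next
    case greater
    have "f \<beta> / \<beta> > f x / x"
    proof (rule DERIV_neg_imp_decreasing_open[OF greater _ contm[OF beta(1)]])
      fix y assume y: "\<beta> < y" "y < x"
      hence "y > 0" using beta(1) by linarith
      thus "\<exists>d. DERIV (\<lambda>x. f x / x) y :> d \<and> d < 0"
        using dm neg y by (intro exI[of _ "\<psi> y / y\<^sup>2"]) (simp add: divide_neg_pos)
    qed
    thus ?thesis by simp
  qed simp
qed



lemma delta_pos:
  fixes f f' f'' :: "real \<Rightarrow> real" and \<beta> \<gamma> k :: real
  assumes sig: "sigmoidal f"
    and d1: "\<forall>x>0. (f has_real_derivative f' x) (at x)"
    and d2: "\<forall>x>0. (f' has_real_derivative f'' x) (at x)"
    and k: "k \<ge> 1"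
    and beta: "\<beta> > 0" "\<beta> * f' \<beta> - f \<beta> = 0" and fb: "f \<beta> > 0"
    and beta_K: "k * \<beta> < 1"
    and x0: "\<exists>x0. 0 < x0 \<and> x0 < 1 / k \<and>
               (\<forall>x. 0 < x \<and> x < x0 \<longrightarrow> f'' x / f' x - 2 * k / (1 - k * x) > 0) \<and>
               (\<forall>x. x0 < x \<and> x < 1 / k \<longrightarrow> f'' x / f' x - 2 * k / (1 - k * x) < 0)"
    and gamma: "0 < \<gamma>" "\<gamma> < 1 / k"
               "\<gamma> * (1 - k * \<gamma>) * f' \<gamma> - f \<gamma> = 0"
               "\<forall>x. 0 < x \<and> x < 1 / k \<and> x * (1 - k * x) * f' x - f x = 0 \<longrightarrow> x = \<gamma>"
  shows "(1 - k * \<gamma>) / \<gamma> * f \<gamma> - (1 - k * \<beta>) / \<beta> * f \<beta> > 0"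
proof -
  define \<phi> where "\<phi> x = x * (1 - k * x) * f' x - f x" for x
  have f0: "f 0 = 0" and fcont: "continuous_on {0..} f" using sig unfolding sigmoidal_def by auto
  have fpnn: "f' x \<ge> 0" if "x > 0" for x using fprime_nonneg[OF sig _ that] d1 that by blast
  obtain x0 where x0: "0 < x0" "x0 < 1 / k"
     "\<And>x. 0 < x \<Longrightarrow> x < x0 \<Longrightarrow> f'' x / f' x - 2 * k / (1 - k * x) > 0" using x0 by blast
  have kpos: "k > 0" using k by simp
  have lt1: "k * x < 1" if "x < 1 / k" for x using that kpos by (simp add: field_simps)
  have dphi: "(\<phi> has_real_derivative ((1 - 2*k*x) * f' x + x * (1 - k*x) * f'' x - f' x)) (at x)"
    if "x > 0" for x
    using d1 d2 that unfolding \<phi>_def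
    by (auto intro!: derivative_eq_intros simp: algebra_simps)
  have contphi: "isCont \<phi> x" if "x > 0" for x using dphi[OF that] by (rule DERIV_isCont)
  have dpos: "(1 - 2*k*x) * f' x + x * (1 - k*x) * f'' x - f' x > 0" if "0 < x" "x < x0" for x
  proof -
    have kx: "1 - k * x > 0" using lt1[of x] that x0 by linarith
    have E: "f'' x / f' x - 2 * k / (1 - k * x) > 0" using x0(3) that by blast
    have "f' x \<noteq> 0"
    proof
      assume "f' x = 0"
      hence "f'' x / f' x - 2 * k / (1 - k * x) = - (2 * k / (1 - k * x))" by simp
      moreover have "2 * k / (1 - k * x) > 0" using kx kpos by simp
      ultimately show False using E by linarith
    qed
    hence fp: "f' x > 0" using fpnn[of x] that by linarith
    have "f'' x / f' x > 2 * k / (1 - k * x)" using E by linarith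
    hence "f'' x * (1 - k * x) > 2 * k * f' x" using fp kx by (simp add: field_simps)
    hence "x * (f'' x * (1 - k * x) - 2 * k * f' x) > 0" using that by simp
    thus ?thesis by (simp add: algebra_simps)
  qed
  have incr: "\<phi> a < \<phi> b" if "0 < a" "a < b" "b < x0" for a b
    by (rule DERIV_pos_imp_increasing[OF that(2)]) (use dphi dpos that in \<open>force\<close>)
  have phi_lb: "\<phi> y \<ge> - f y" if "0 < y" "y < x0" for y
  proof -
    have "1 - k * y > 0" using lt1[of y] that x0 by linarith
    hence "y * (1 - k * y) * f' y \<ge> 0" using fpnn[of y] that by simp
    thus ?thesis unfolding \<phi>_def by simp
  qed
  have phipos: "\<phi> y > 0" if y: "0 < y" "y < x0" for y
  proof -
    have "\<phi> (y/2) \<ge> 0"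
    proof (rule ccontr)
      assume "\<not> \<phi> (y/2) \<ge> 0"
      hence e: "- \<phi> (y/2) > 0" by simp
      obtain d where d: "d > 0" "\<And>x'. x' \<in> {0..} \<Longrightarrow> dist x' 0 < d \<Longrightarrow> dist (f x') (f 0) < - \<phi> (y/2)"
        using fcont e unfolding continuous_on_iff by (metis atLeast_iff order_refl)
      define \<epsilon> where "\<epsilon> = min d (y/2) / 2"
      have eps: "0 < \<epsilon>" "\<epsilon> < y/2" "\<epsilon> < d" using d y unfolding \<epsilon>_def by auto
      have "dist (f \<epsilon>) (f 0) < - \<phi> (y/2)" using d(2)[of \<epsilon>] eps by simp
      hence "f \<epsilon> < - \<phi> (y/2)" using f0 by (simp add: dist_real_def)
      moreover have "\<phi> \<epsilon> < \<phi> (y/2)" using incr[of \<epsilon> "y/2"] eps y by simp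
      moreover have "\<phi> \<epsilon> \<ge> - f \<epsilon>" using phi_lb[of \<epsilon>] eps y by simp
      ultimately show False by linarith
    qed
    moreover have "\<phi> (y/2) < \<phi> y" using incr[of "y/2" y] y by simp
    ultimately show ?thesis by linarith
  qed
  have phib: "\<phi> \<beta> < 0"
  proof -
    have "\<phi> \<beta> = (1 - k * \<beta>) * (\<beta> * f' \<beta>) - f \<beta>" unfolding \<phi>_def by (simp add: algebra_simps)
    also have "\<dots> = - (k * \<beta> * f \<beta>)" using beta(2) by (simp add: algebra_simps)
    finally show ?thesis using kpos beta(1) fb by simp
  qed
  have phig: "\<phi> \<gamma> = 0" using gamma(3) unfolding \<phi>_def by simp
  have uniq: "x = \<gamma>" if "0 < x" "x < 1 / k" "\<phi> x = 0" for x
    using gamma(4) that unfolding \<phi>_def by blast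
  have gx0: "\<gamma> \<ge> x0" using phipos[of \<gamma>] phig gamma(1) by force
  have bx0: "\<beta> \<ge> x0" using phipos[of \<beta>] phib beta(1) by force
  have b1k: "\<beta> < 1 / k" using beta_K kpos by (simp add: field_simps)
  have bg: "\<gamma> < \<beta>"
  proof (rule ccontr)
    assume "\<not> \<gamma> < \<beta>"
    hence "\<beta> < \<gamma>" using phib phig by (cases "\<beta> = \<gamma>") auto
    define p where "p = x0 / 2"
    have p: "0 < p" "p < x0" using x0 unfolding p_def by auto
    have "\<phi> p > 0" using phipos p by blast
    moreover have "\<forall>x. p \<le> x \<and> x \<le> \<beta> \<longrightarrow> isCont \<phi> x" using contphi p by auto
    ultimately obtain z where z: "p \<le> z" "z \<le> \<beta>" "\<phi> z = 0"
      using IVT2[of \<phi> \<beta> 0 p] phib p bx0 by force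
    have "z = \<gamma>" using uniq[of z] z p b1k by linarith
    thus False using z \<open>\<beta> < \<gamma>\<close> by simp
  qed
  have neg: "\<phi> v < 0" if "\<gamma> < v" "v < 1 / k" for v
  proof -
    have "(\<lambda>x. - \<phi> x) v > 0"
    proof (rule sign_const[of \<gamma> "1 / k" "\<lambda>x. - \<phi> x" \<beta> v])
      show "isCont (\<lambda>x. - \<phi> x) x" if "\<gamma> < x" for x
        using contphi[of x] gamma(1) that by (intro continuous_intros) auto
      show "- \<phi> x \<noteq> 0" if "\<gamma> < x" "x < 1 / k" for x
        using uniq[of x] that gamma(1) by force
      show "- \<phi> \<beta> > 0" using phib by simp
    qed (use that bg b1k in auto)
    thus ?thesis by simp
  qed
  define g where "g x = (1 - k * x) / x * f x" for x
  have dg: "(g has_real_derivative \<phi> x / x\<^sup>2) (at x)" if "x > 0" for x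
    using d1 that unfolding g_def \<phi>_def
    by (auto intro!: derivative_eq_intros simp: field_simps power2_eq_square)
  have contg: "continuous_on {\<gamma>..\<beta>} g"
    by (rule continuous_at_imp_continuous_on) (use dg gamma(1) in \<open>meson DERIV_isCont order_less_le_trans atLeastAtMost_iff\<close>)
  have "g \<gamma> > g \<beta>"
  proof (rule DERIV_neg_imp_decreasing_open[OF bg _ contg])
    fix y assume y: "\<gamma> < y" "y < \<beta>"
    hence "y > 0" using gamma(1) by linarith
    moreover have "\<phi> y < 0" using neg y b1k by simp
    ultimately show "\<exists>d. DERIV g y :> d \<and> d < 0"
      using dg by (intro exI[of _ "\<phi> y / y\<^sup>2"]) (simp add: divide_neg_pos)
  qed
  thus ?thesis unfolding g_def by simp
qed



definition okW :: "nat \<Rightarrow> real \<Rightarrow> real \<Rightarrow> real list \<Rightarrow> bool" where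
  "okW K \<sigma>2 \<gamma> ws \<longleftrightarrow> (\<forall>w\<in>set ws. w = \<sigma>2 + (\<Sum>j<K. \<sigma>2 * (\<gamma> / (1 - (real K - 1) * \<gamma>))))"

lemma trigger_eq: "trigger K \<sigma>2 \<beta> \<gamma> i t ws ps h =
  (if okW K \<sigma>2 \<gamma> ws then \<sigma>2 / h * (\<gamma> / (1 - (real K - 1) * \<gamma>)) else \<sigma>2 / h * (\<beta> / (1 - (real K - 1) * \<beta>)))"
  unfolding trigger_def okW_def by simp

lemma okW_snoc: "okW K \<sigma>2 \<gamma> (ws @ [w]) \<longleftrightarrow> okW K \<sigma>2 \<gamma> ws \<and> w = \<sigma>2 + (\<Sum>j<K. \<sigma>2 * (\<gamma> / (1 - (real K - 1) * \<gamma>)))"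
  unfolding okW_def by auto

lemma hist_len: "length (fst (history K \<sigma>2 \<tau> G h0 m)) = length (fst h0) + m"
  by (induction m) (auto simp: split_beta Let_def)

lemma profile_eq: "profile K \<sigma>2 \<tau> G h0 m = (\<lambda>j. \<tau> j (length (fst h0) + m) (fst (history K \<sigma>2 \<tau> G h0 m))
     (snd (history K \<sigma>2 \<tau> G h0 m) j) (G (length (fst h0) + m) j))"
  unfolding profile_def by (simp add: split_beta Let_def hist_len)

lemma hist_Suc_fst: "fst (history K \<sigma>2 \<tau> G h0 (Suc m)) =
   fst (history K \<sigma>2 \<tau> G h0 m) @ [signal K \<sigma>2 (G (length (fst h0) + m)) (profile K \<sigma>2 \<tau> G h0 m)]"
  by (simp add: split_beta Let_def profile_eq hist_len)

lemma sum_others: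
  assumes "i < K" "\<And>j. j < K \<Longrightarrow> j \<noteq> i \<Longrightarrow> p j * h j = c"
  shows "(\<Sum>j\<in>{..<K} - {i}. p j * h j) = (real K - 1) * c"
proof -
  have "(\<Sum>j\<in>{..<K} - {i}. p j * h j) = (\<Sum>j\<in>{..<K} - {i}. c)" using assms(2) by (intro sum.cong) auto
  also have "\<dots> = real (K - 1) * c" using assms(1) by simp
  also have "\<dots> = (real K - 1) * c" using assms(1) by (simp add: of_nat_diff)
  finally show ?thesis .
qed

lemma util_form:
  assumes "i < K" "\<And>j. j < K \<Longrightarrow> j \<noteq> i \<Longrightarrow> p j * h j = \<sigma>2 * c"
  shows "utility K \<sigma>2 f R h p i = R i * f (p i * h i / ((real K - 1) * (\<sigma>2 * c) + \<sigma>2)) / p i"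
  unfolding utility_def SINR_def using sum_others[OF assms] by simp

lemma signal_form:
  assumes "i < K" "\<And>j. j < K \<Longrightarrow> j \<noteq> i \<Longrightarrow> p j * h j = \<sigma>2 * c"
  shows "signal K \<sigma>2 h p = \<sigma>2 + (real K - 1) * (\<sigma>2 * c) + h i * p i"
proof -
  have "(\<Sum>j<K. h j * p j) = h i * p i + (\<Sum>j\<in>{..<K} - {i}. p j * h j)"
    using assms(1) by (subst sum.remove[of "{..<K}" i]) (auto simp: mult.commute)
  thus ?thesis unfolding signal_def using sum_others[OF assms] by simp
qed

lemma best_resp:
  fixes f :: "real \<Rightarrow> real"
  assumes fmax: "\<And>x. x > 0 \<Longrightarrow> f x / x \<le> f \<beta> / \<beta>" and beta: "\<beta> > 0" and fb: "f \<beta> > 0"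
    and fnn: "\<And>x. x \<ge> 0 \<Longrightarrow> f x \<ge> 0"
    and R: "r > 0" and h: "h > 0" and I: "I > 0" and x: "x \<ge> 0"
  shows "r * f (x * h / I) / x \<le> r * h * f \<beta> / (\<beta> * I)" "0 \<le> r * f (x * h / I) / x"
proof -
  show "0 \<le> r * f (x * h / I) / x" using fnn[of "x * h / I"] R h I x by simp
  show "r * f (x * h / I) / x \<le> r * h * f \<beta> / (\<beta> * I)"
  proof (cases "x = 0")
    case True thus ?thesis using R h I beta fb by simp
  next
    case False
    hence xp: "x > 0" using x by simp
    define y where "y = x * h / I"
    have yp: "y > 0" using xp h I unfolding y_def by simp
    have "f y / x = (f y / y) * (h / I)" unfolding y_def using xp h I by (simp add: field_simps)
    also have "\<dots> \<le> (f \<beta> / \<beta>) * (h / I)" using fmax[OF yp] h I by (intro mult_right_mono) auto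
    finally have "f y / x \<le> (f \<beta> / \<beta>) * (h / I)" .
    hence "r * (f y / x) \<le> r * ((f \<beta> / \<beta>) * (h / I))" using R by (intro mult_left_mono) auto
    thus ?thesis unfolding y_def by (simp add: field_simps)
  qed
qed

lemma summable_geom_bound:
  fixes lam M :: real
  assumes "0 < lam" "lam < 1" "\<And>m. 0 \<le> x m" "\<And>m. x m \<le> lam * (1 - lam) ^ m * M"
  shows "summable x"
proof (rule summable_comparison_test[of _ "\<lambda>m. lam * M * (1 - lam) ^ m"])
  show "summable (\<lambda>m. lam * M * (1 - lam) ^ m)" using assms(1,2) by (intro summable_mult summable_geometric) auto
  show "\<exists>N. \<forall>n\<ge>N. norm (x n) \<le> lam * M * (1 - lam) ^ n" using assms(3,4) by (auto simp: mult_ac)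
qed

lemma tail_sums:
  fixes lam :: real
  assumes "0 < lam" "lam < 1"
  shows "(\<lambda>m. if m > m0 then lam * (1 - lam) ^ m else 0) sums (1 - lam) ^ Suc m0"
proof -
  have g: "(\<lambda>i. (1 - lam) ^ i) sums (1 / (1 - (1 - lam)))" using assms by (intro geometric_sums) auto
  have "(\<lambda>i. ((1 - lam) ^ Suc m0 * lam) * (1 - lam) ^ i) sums (((1 - lam) ^ Suc m0 * lam) * (1 / (1 - (1 - lam))))"
    by (rule sums_mult[OF g])
  hence "(\<lambda>i. (\<lambda>m. if m > m0 then lam * (1 - lam) ^ m else 0) (i + Suc m0)) sums ((1 - lam) ^ Suc m0)"
    using assms by (simp add: power_add mult_ac)
  hence "(\<lambda>m. if m > m0 then lam * (1 - lam) ^ m else 0) sums ((1 - lam) ^ Suc m0 + (\<Sum>i<Suc m0. (\<lambda>m. if m > m0 then lam * (1 - lam) ^ m else 0) i))"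
    by (subst (asm) sums_iff_shift)
  thus ?thesis by simp
qed



lemma game:
  fixes K :: nat and \<sigma>2 lam \<beta> \<gamma> \<delta> :: real and R Pmax \<eta>min \<eta>max :: "nat \<Rightarrow> real"
    and f :: "real \<Rightarrow> real" and s :: strategy and G :: "nat \<Rightarrow> nat \<Rightarrow> real"
  assumes K: "K \<ge> 2" and sigma: "\<sigma>2 > 0" and Ri: "R i > 0" and i: "i < K"
    and eta: "\<forall>j<K. 0 < \<eta>min j \<and> \<eta>min j \<le> \<eta>max j"
    and fmax: "\<And>x. x > 0 \<Longrightarrow> f x / x \<le> f \<beta> / \<beta>" and beta: "\<beta> > 0" and fb: "f \<beta> > 0"
    and fnn: "\<And>x. x \<ge> 0 \<Longrightarrow> f x \<ge> 0"
    and bK: "(real K - 1) * \<beta> < 1" and gamma: "\<gamma> > 0" and gK: "(real K - 1) * \<gamma> < 1"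
    and \<delta>: "\<delta> = (1 - (real K - 1) * \<gamma>) / \<gamma> * f \<gamma> - (1 - (real K - 1) * \<beta>) / \<beta> * f \<beta>"
    and dpos: "\<delta> > 0"
    and lam: "0 < lam" "lam < 1"
    and lb: "lam \<le> \<eta>min i * \<delta> / (\<eta>min i * \<delta> + \<eta>max i * ((real K - 1) * f \<beta> - \<delta>))"
    and G: "admissible_gains K \<eta>min \<eta>max G"
    and s: "valid_strategy Pmax \<eta>min \<eta>max i s"
  shows "payoff K \<sigma>2 f R lam ((trigger K \<sigma>2 \<beta> \<gamma>)(i := s)) G h0 i
           \<le> payoff K \<sigma>2 f R lam (trigger K \<sigma>2 \<beta> \<gamma>) G h0 i"
proof -
  define k where "k = real K - 1"
  define cg where "cg = \<gamma> / (1 - k * \<gamma>)"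
  define cb where "cb = \<beta> / (1 - k * \<beta>)"
  define W where "W = \<sigma>2 + (\<Sum>j<K. \<sigma>2 * (\<gamma> / (1 - (real K - 1) * \<gamma>)))"
  define Ig where "Ig = k * (\<sigma>2 * cg) + \<sigma>2"
  define Ib where "Ib = k * (\<sigma>2 * cb) + \<sigma>2"
  define gg where "gg = (1 - k * \<gamma>) / \<gamma> * f \<gamma>"
  define gb where "gb = (1 - k * \<beta>) / \<beta> * f \<beta>"
  define X where "X = k * f \<beta> - \<delta>"
  define Cu where "Cu h = R i * f \<gamma> / (\<sigma>2 / h * cg)" for h
  define Nu where "Nu h = R i * h * f \<beta> / (\<beta> * Ib)" for h
  define Du where "Du h = R i * h * f \<beta> / (\<beta> * Ig)" for h
  define \<tau> where "\<tau> = trigger K \<sigma>2 \<beta> \<gamma>"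
  define \<tau>' where "\<tau>' = \<tau>(i := s)"
  define N0 where "N0 = length (fst h0)"
  have k1: "k \<ge> 1" using K unfolding k_def by simp
  have kg: "1 - k * \<gamma> > 0" using gK unfolding k_def by simp
  have kb: "1 - k * \<beta> > 0" using bK unfolding k_def by simp
  have cgp: "cg > 0" using kg gamma unfolding cg_def by simp
  have cbp: "cb > 0" using kb beta unfolding cb_def by simp
  have Igp: "Ig > 0" using k1 sigma cgp unfolding Ig_def by (simp add: add_pos_nonneg)
  have Ibp: "Ib > 0" using k1 sigma cbp unfolding Ib_def by (simp add: add_pos_nonneg)
  have Gpos: "G t j > 0" if "j < K" for t j
  proof -
    have "\<eta>min j \<le> G t j" using G that unfolding admissible_gains_def by blast
    moreover have "0 < \<eta>min j" using eta that by blast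
    ultimately show ?thesis by linarith
  qed
  have Gi: "\<eta>min i \<le> G t i" "G t i \<le> \<eta>max i" for t using G i unfolding admissible_gains_def by auto
  have etai: "0 < \<eta>min i" "\<eta>min i \<le> \<eta>max i" using eta i by auto
  have "W = \<sigma>2 + real K * (\<sigma>2 * cg)" unfolding W_def cg_def k_def by simp
  hence W_eq: "W = \<sigma>2 + k * (\<sigma>2 * cg) + \<sigma>2 * cg" unfolding k_def by (simp add: algebra_simps)
  have sinr_g: "\<sigma>2 * cg / Ig = \<gamma>"
    unfolding Ig_def cg_def using kg sigma by (simp add: field_simps)
  have sinr_b: "\<sigma>2 * cb / Ib = \<beta>"
    unfolding Ib_def cb_def using kb sigma by (simp add: field_simps)
  have Cu_eq: "Cu h = R i * h / \<sigma>2 * gg" if "h > 0" for h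
    unfolding Cu_def gg_def cg_def using that kg sigma gamma by (simp add: field_simps)
  have Nu_eq: "Nu h = R i * h / \<sigma>2 * gb" if "h > 0" for h
    unfolding Nu_def gb_def Ib_def cb_def using that kb sigma beta by (simp add: field_simps)
  have Du_eq: "Du h = R i * h / \<sigma>2 * ((1 - k * \<gamma>) * (f \<beta> / \<beta>))" if "h > 0" for h
    unfolding Du_def Ig_def cg_def using that kg sigma beta by (simp add: field_simps)
  have Nu_alt: "R i * f \<beta> / (\<sigma>2 / h * cb) = Nu h" if "h > 0" for h
    unfolding Nu_def using sinr_b that sigma cbp Ibp beta
    by (simp add: field_simps)
  have ggb: "gg - gb = \<delta>" unfolding gg_def gb_def \<delta> k_def by simp
  have X_eq: "X = f \<beta> / \<beta> - gg" unfolding X_def ggb[symmetric] gb_def gg_def using beta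
    by (simp add: field_simps)
  define ok where "ok ws = okW K \<sigma>2 \<gamma> ws" for ws
  define H where "H m = history K \<sigma>2 \<tau> G h0 m" for m
  define H' where "H' m = history K \<sigma>2 \<tau>' G h0 m" for m
  define okm where "okm m = ok (fst (H' m))" for m
  have okW_snoc': "ok (ws @ [w]) \<longleftrightarrow> ok ws \<and> w = W" for ws w
    unfolding ok_def W_def by (rule okW_snoc)
  have prof_tau: "profile K \<sigma>2 \<tau> G h0 m = (\<lambda>j. \<sigma>2 / G (N0+m) j * (if ok (fst (H m)) then cg else cb))" for m
    unfolding profile_eq \<tau>_def trigger_eq N0_def cg_def cb_def k_def ok_def H_def by (rule ext) simp
  have prof_tau'_o: "profile K \<sigma>2 \<tau>' G h0 m j = \<sigma>2 / G (N0+m) j * (if okm m then cg else cb)"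
    if "j \<noteq> i" for m j
    unfolding profile_eq \<tau>'_def \<tau>_def trigger_eq N0_def cg_def cb_def k_def okm_def ok_def H'_def using that by simp
  have xnn: "0 \<le> profile K \<sigma>2 \<tau>' G h0 m i" for m
    unfolding profile_eq \<tau>'_def using s Gi unfolding valid_strategy_def by simp
  have pmul: "\<sigma>2 / h * c * h = \<sigma>2 * c" if "h > 0" for h c using that by simp
  have Gnz: "G t j \<noteq> 0" if "j < K" for t j using Gpos[OF that, of t] by simp
  have pmulG: "\<sigma>2 / G t j * c * G t j = \<sigma>2 * c" if "j < K" for t j c using pmul[OF Gpos[OF that]] .
  have ok_tau: "ok (fst (H m)) = ok (fst h0)" for m
  proof (induction m)
    case 0 show ?case unfolding H_def by simp
  next
    case (Suc m)
    have "fst (H (Suc m)) = fst (H m) @ [signal K \<sigma>2 (G (N0 + m)) (profile K \<sigma>2 \<tau> G h0 m)]"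
      unfolding H_def N0_def by (rule hist_Suc_fst)
    moreover have "ok (fst (H m)) \<Longrightarrow> signal K \<sigma>2 (G (N0 + m)) (profile K \<sigma>2 \<tau> G h0 m) = W"
    proof -
      assume okm: "ok (fst (H m))"
      have "signal K \<sigma>2 (G (N0 + m)) (profile K \<sigma>2 \<tau> G h0 m) =
            \<sigma>2 + (real K - 1) * (\<sigma>2 * cg) + G (N0 + m) i * profile K \<sigma>2 \<tau> G h0 m i"
        by (rule signal_form[OF i]) (use okm in \<open>simp add: prof_tau pmulG Gnz\<close>)
      also have "\<dots> = W" using okm Gpos[OF i, of "N0+m"] by (simp add: prof_tau W_eq k_def)
      finally show ?thesis .
    qed
    ultimately show ?case using Suc by (auto simp: okW_snoc')
  qed
  have u_tau: "utility K \<sigma>2 f R (G (N0+m)) (profile K \<sigma>2 \<tau> G h0 m) i =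
       (if ok (fst h0) then Cu (G (N0+m) i) else Nu (G (N0+m) i))" for m
  proof -
    define h where "h = G (N0+m) i"
    have hp: "h > 0" unfolding h_def using Gpos[OF i] .
    show ?thesis
    proof (cases "ok (fst h0)")
      case True
      have "utility K \<sigma>2 f R (G (N0+m)) (profile K \<sigma>2 \<tau> G h0 m) i =
            R i * f (\<sigma>2 / h * cg * h / ((real K - 1) * (\<sigma>2 * cg) + \<sigma>2)) / (\<sigma>2 / h * cg)"
        by (subst util_form[OF i, of _ _ _ cg]) (use True ok_tau in \<open>auto simp: prof_tau h_def pmulG Gnz\<close>)
      also have "\<dots> = Cu h" unfolding Cu_def using pmul[OF hp] sinr_g by (simp add: Ig_def k_def)
      finally show ?thesis using True h_def by simp
    next
      case False
      have "utility K \<sigma>2 f R (G (N0+m)) (profile K \<sigma>2 \<tau> G h0 m) i =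
            R i * f (\<sigma>2 / h * cb * h / ((real K - 1) * (\<sigma>2 * cb) + \<sigma>2)) / (\<sigma>2 / h * cb)"
        by (subst util_form[OF i, of _ _ _ cb]) (use False ok_tau in \<open>auto simp: prof_tau h_def pmulG Gnz\<close>)
      also have "\<dots> = Nu h" using pmul[OF hp] sinr_b Nu_alt[OF hp] by (simp add: Ib_def k_def)
      finally show ?thesis using False h_def by simp
    qed
  qed
  define x where "x m = profile K \<sigma>2 \<tau>' G h0 m i" for m
  define hh where "hh m = G (N0 + m) i" for m
  define u where "u m = utility K \<sigma>2 f R (G (N0+m)) (profile K \<sigma>2 \<tau>' G h0 m) i" for m
  have hhp: "hh m > 0" for m unfolding hh_def using Gpos[OF i] .
  have hhb: "\<eta>min i \<le> hh m" "hh m \<le> \<eta>max i" for m unfolding hh_def using Gi by auto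
  have okm0: "okm 0 = ok (fst h0)" unfolding okm_def H'_def by simp
  have Hsuc': "fst (H' (Suc m)) = fst (H' m) @ [signal K \<sigma>2 (G (N0 + m)) (profile K \<sigma>2 \<tau>' G h0 m)]" for m
    unfolding H'_def N0_def by (rule hist_Suc_fst)
  have okm_Suc: "okm (Suc m) \<longleftrightarrow> okm m \<and> signal K \<sigma>2 (G (N0 + m)) (profile K \<sigma>2 \<tau>' G h0 m) = W" for m
    unfolding okm_def Hsuc' okW_snoc' ..
  have others: "profile K \<sigma>2 \<tau>' G h0 m j * G (N0 + m) j = \<sigma>2 * (if okm m then cg else cb)"
    if "j < K" "j \<noteq> i" for m j using that by (simp add: prof_tau'_o pmulG Gnz)
  have u_form: "u m = R i * f (x m * hh m / ((real K - 1) * (\<sigma>2 * (if okm m then cg else cb)) + \<sigma>2)) / x m" for m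
    unfolding u_def x_def hh_def by (rule util_form[OF i]) (rule others)
  have sig_ok: "signal K \<sigma>2 (G (N0 + m)) (profile K \<sigma>2 \<tau>' G h0 m) = \<sigma>2 + k * (\<sigma>2 * cg) + hh m * x m"
    if "okm m" for m
    unfolding x_def hh_def k_def by (rule signal_form[OF i]) (use others[of _ m] that in auto)
  have ub_ok: "u m \<le> Du (hh m) \<and> 0 \<le> u m" if "okm m" for m
  proof -
    have "u m = R i * f (x m * hh m / Ig) / x m" using u_form[of m] that by (simp add: Ig_def k_def)
    thus ?thesis using best_resp[OF fmax beta fb fnn Ri hhp Igp xnn[of m, folded x_def]]
      unfolding Du_def by simp
  qed
  have ub_nok: "u m \<le> Nu (hh m) \<and> 0 \<le> u m" if "\<not> okm m" for m
  proof -
    have "u m = R i * f (x m * hh m / Ib) / x m" using u_form[of m] that by (simp add: Ib_def k_def)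
    thus ?thesis using best_resp[OF fmax beta fb fnn Ri hhp Ibp xnn[of m, folded x_def]]
      unfolding Nu_def by simp
  qed
  have eq_ok: "u m = Cu (hh m)" if "okm m" "okm (Suc m)" for m
  proof -
    have "hh m * x m = \<sigma>2 * cg" using okm_Suc[of m] that sig_ok[of m] W_eq by simp
    hence xm: "x m = \<sigma>2 / hh m * cg" using hhp[of m] by (simp add: field_simps)
    have "u m = R i * f (x m * hh m / Ig) / x m" using u_form[of m] that by (simp add: Ig_def k_def)
    also have "\<dots> = Cu (hh m)" unfolding Cu_def xm using pmul[OF hhp[of m]] sinr_g by simp
    finally show ?thesis .
  qed
  have nok_mono: "\<not> okm m'" if "m \<le> m'" "\<not> okm m" for m m'
    using that(1)
  proof (induction rule: dec_induct)
    case base then show ?case using that(2) .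
  next
    case (step n) then show ?case using okm_Suc[of n] by simp
  qed
  define A where "A = R i * \<eta>max i * max X 0 / \<sigma>2"
  define B where "B = R i * \<eta>min i * \<delta> / \<sigma>2"
  define M where "M = R i * \<eta>max i / \<sigma>2 * gg"
  have gbp: "gb > 0" unfolding gb_def using kb beta fb by simp
  have ggp: "gg > 0" using ggb dpos gbp by linarith
  have Rh: "R i * h / \<sigma>2 \<ge> 0" if "h > 0" for h using Ri that sigma by simp
  have Cu_b: "0 \<le> Cu (hh m) \<and> Cu (hh m) \<le> M" for m
  proof -
    have "R i * hh m / \<sigma>2 \<le> R i * \<eta>max i / \<sigma>2" using hhb[of m] Ri sigma
      by (intro divide_right_mono mult_left_mono) auto
    thus ?thesis unfolding Cu_eq[OF hhp] M_def using ggp Rh[OF hhp[of m]]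
      by (metis less_eq_real_def mult_right_mono mult_nonneg_nonneg)
  qed
  have Nu_b: "0 \<le> Nu (hh m) \<and> Nu (hh m) \<le> M" for m
  proof -
    have "R i * hh m / \<sigma>2 \<le> R i * \<eta>max i / \<sigma>2" using hhb[of m] Ri sigma
      by (intro divide_right_mono mult_left_mono) auto
    moreover have "gb \<le> gg" using ggb dpos by linarith
    ultimately show ?thesis unfolding Nu_eq[OF hhp] M_def using gbp Rh[OF hhp[of m]] ggp
      by (intro conjI mult_nonneg_nonneg mult_mono) auto
  qed
  have num1: "Du (hh m) - Cu (hh m) \<le> A" for m
  proof -
    have "Du (hh m) - Cu (hh m) = R i * hh m / \<sigma>2 * ((1 - k * \<gamma>) * (f \<beta> / \<beta>) - gg)"
      unfolding Du_eq[OF hhp] Cu_eq[OF hhp] by (simp add: algebra_simps)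
    also have "\<dots> \<le> R i * hh m / \<sigma>2 * X"
    proof (rule mult_left_mono[OF _ Rh[OF hhp]])
      have "(1 - k * \<gamma>) * (f \<beta> / \<beta>) \<le> 1 * (f \<beta> / \<beta>)"
        using k1 gamma fb beta by (intro mult_right_mono) auto
      thus "(1 - k * \<gamma>) * (f \<beta> / \<beta>) - gg \<le> X" unfolding X_eq by simp
    qed
    also have "\<dots> \<le> R i * \<eta>max i * max X 0 / \<sigma>2"
    proof -
      have "hh m * X \<le> \<eta>max i * max X 0"
      proof (cases "X \<ge> 0")
        case True thus ?thesis using hhb[of m] by (simp add: mult_right_mono)
      next
        case False thus ?thesis using hhp[of m] etai by (simp add: mult_nonneg_nonpos)
      qed
      hence "R i * (hh m * X) \<le> R i * (\<eta>max i * max X 0)" using Ri by (intro mult_left_mono) auto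
      thus ?thesis using sigma by (simp add: divide_right_mono mult.assoc)
    qed
    finally show ?thesis unfolding A_def .
  qed
  have num2: "Nu (hh m) \<le> Cu (hh m) - B" for m
  proof -
    have "Cu (hh m) - Nu (hh m) = R i * hh m / \<sigma>2 * \<delta>"
      unfolding Nu_eq[OF hhp] Cu_eq[OF hhp] ggb[symmetric] by (simp add: right_diff_distrib)
    moreover have "R i * \<eta>min i * \<delta> / \<sigma>2 \<le> R i * hh m / \<sigma>2 * \<delta>"
    proof -
      have "R i * \<eta>min i * \<delta> \<le> R i * hh m * \<delta>" using hhb[of m] Ri dpos by (intro mult_right_mono mult_left_mono) auto
      thus ?thesis using sigma by (simp add: divide_right_mono)
    qed
    ultimately show ?thesis unfolding B_def by linarith
  qed
  have key: "lam * A \<le> (1 - lam) * B"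
  proof -
    have XX: "X = (real K - 1) * f \<beta> - \<delta>" unfolding X_def k_def ..
    define Dn where "Dn = \<eta>min i * \<delta> + \<eta>max i * X"
    have num: "\<eta>min i * \<delta> > 0" using etai dpos by simp
    have Dn: "Dn > 0"
    proof (rule ccontr)
      assume "\<not> Dn > 0"
      hence "\<eta>min i * \<delta> / Dn \<le> 0" using num by (simp add: divide_nonneg_nonpos)
      thus False using lb lam(1) unfolding Dn_def XX by linarith
    qed
    have "lam * Dn \<le> \<eta>min i * \<delta>" using lb Dn unfolding Dn_def XX by (simp add: field_simps)
    hence e1: "lam * (\<eta>max i * X) \<le> (1 - lam) * (\<eta>min i * \<delta>)" unfolding Dn_def by (simp add: algebra_simps)
    have "lam * (\<eta>max i * max X 0) \<le> (1 - lam) * (\<eta>min i * \<delta>)"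
    proof (cases "X \<ge> 0")
      case True thus ?thesis using e1 by simp
    next
      case False thus ?thesis using lam num by simp
    qed
    hence "R i / \<sigma>2 * (lam * (\<eta>max i * max X 0)) \<le> R i / \<sigma>2 * ((1 - lam) * (\<eta>min i * \<delta>))"
      using Ri sigma by (intro mult_left_mono) auto
    moreover have "lam * A = R i / \<sigma>2 * (lam * (\<eta>max i * max X 0))" unfolding A_def by (simp add: field_simps)
    moreover have "(1 - lam) * B = R i / \<sigma>2 * ((1 - lam) * (\<eta>min i * \<delta>))" unfolding B_def by (simp add: field_simps)
    ultimately show ?thesis by linarith
  qed
  define w where "w m = lam * (1 - lam) ^ m" for m :: nat
  define a where "a m = w m * u m" for m
  define b where "b m = w m * (if ok (fst h0) then Cu (hh m) else Nu (hh m))" for m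
  have wnn: "w m \<ge> 0" for m unfolding w_def using lam by simp
  have payQ: "payoff K \<sigma>2 f R lam \<tau>' G h0 i = suminf a"
    unfolding payoff_def a_def w_def u_def N0_def ..
  have payP: "payoff K \<sigma>2 f R lam \<tau> G h0 i = suminf b"
    unfolding payoff_def b_def w_def u_tau[unfolded N0_def] hh_def N0_def ..
  have ann: "a m \<ge> 0" for m unfolding a_def using wnn ub_ok ub_nok by (metis mult_nonneg_nonneg)
  have bnn: "0 \<le> b m \<and> b m \<le> lam * (1 - lam) ^ m * M" for m
    unfolding b_def w_def using Cu_b[of m] Nu_b[of m] wnn[of m, unfolded w_def]
    by (auto intro: mult_left_mono)
  have sb: "summable b" using summable_geom_bound[OF lam] bnn by blast
  have main: "suminf a \<le> suminf b"
  proof (cases "ok (fst h0)")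
    case False
    have nok: "\<not> okm m" for m using nok_mono[of 0 m] okm0 False by simp
    have le: "a m \<le> b m" for m unfolding a_def b_def using False ub_nok[OF nok[of m]] wnn[of m]
      by (simp add: mult_left_mono)
    have sa: "summable a" by (rule summable_comparison_test[OF _ sb]) (use ann le in auto)
    show ?thesis by (rule suminf_le[OF le sa sb])
  next
    case True
    show ?thesis
    proof (cases "\<forall>m. okm m")
      case True': True
      have "a m = b m" for m unfolding a_def b_def using eq_ok True' True by simp
      hence "a = b" by auto
      thus ?thesis by simp
    next
      case False
      then obtain m1 where m1: "\<not> okm m1" by blast
      define k1 where "k1 = (LEAST m. \<not> okm m)"
      have nk1: "\<not> okm k1" unfolding k1_def using m1 by (rule LeastI)
      have okless: "okm m" if "m < k1" for m using not_less_Least[OF that[unfolded k1_def]] by simp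
      have k1p: "k1 > 0" using nk1 okm0 True by (cases k1) auto
      define m0 where "m0 = k1 - 1"
      have m0: "Suc m0 = k1" unfolding m0_def using k1p by simp
      define l where "l m = (if m = m0 then - (lam * (1 - lam) ^ m * A) else 0)
          + (if m > m0 then lam * (1 - lam) ^ m else 0) * B" for m
      define Ls where "Ls = - (lam * (1 - lam) ^ m0 * A) + (1 - lam) ^ Suc m0 * B"
      have lsums: "l sums Ls"
        unfolding l_def Ls_def
        by (intro sums_add sums_single sums_mult2 tail_sums lam)
      have Lsnn: "Ls \<ge> 0"
      proof -
        have "Ls = (1 - lam) ^ m0 * ((1 - lam) * B - lam * A)" unfolding Ls_def by (simp add: algebra_simps)
        thus ?thesis using key lam by simp
      qed
      have le: "a m \<le> b m - l m" for m
      proof (cases m0 m rule: linorder_cases)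
        case greater
        hence "okm m" "okm (Suc m)" using okless m0 by auto
        hence "a m = b m" unfolding a_def b_def using eq_ok True by simp
        thus ?thesis unfolding l_def using greater by simp
      next
        case equal
        hence "okm m" using okless m0 by auto
        hence "u m \<le> Cu (hh m) + A" using ub_ok num1[of m] by fastforce
        hence "w m * u m \<le> w m * (Cu (hh m) + A)" using wnn by (intro mult_left_mono) auto
        thus ?thesis unfolding a_def b_def l_def w_def using True equal by (simp add: algebra_simps)
      next
        case less
        hence "\<not> okm m" using nok_mono[of k1 m] nk1 m0 by simp
        hence "u m \<le> Cu (hh m) - B" using ub_nok num2[of m] by fastforce
        hence "w m * u m \<le> w m * (Cu (hh m) - B)" using wnn by (intro mult_left_mono) auto
        thus ?thesis unfolding a_def b_def l_def w_def using True less by (simp add: algebra_simps)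
      qed
      have sbl: "summable (\<lambda>m. b m - l m)" using sb lsums by (intro summable_diff) (auto simp: sums_iff)
      have sa: "summable a" by (rule summable_comparison_test[OF _ sbl]) (use ann le in auto)
      have "suminf a \<le> (\<Sum>m. b m - l m)" by (rule suminf_le[OF le sa sbl])
      also have "\<dots> = suminf b - Ls" using suminf_diff[OF sb] lsums by (auto simp: sums_iff)
      finally show ?thesis using Lsnn by simp
    qed
  qed
  show ?thesis using main payQ payP unfolding \<tau>'_def \<tau>_def by simp
qed
theorem theorem9:
  fixes K :: nat and \<sigma>2 lam \<beta> \<gamma> :: real
    and R Pmax \<eta>min \<eta>max :: "nat \<Rightarrow> real"
    and f f' f'' :: "real \<Rightarrow> real"
  assumes K: "K \<ge> 2"
    and sigma: "\<sigma>2 > 0"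
    and R: "\<forall>i<K. R i > 0"
    and eta: "\<forall>i<K. 0 < \<eta>min i \<and> \<eta>min i \<le> \<eta>max i"
    and sig: "sigmoidal f"
    and d1: "\<forall>x>0. (f has_real_derivative f' x) (at x)"
    and d2: "\<forall>x>0. (f' has_real_derivative f'' x) (at x)"
    and beta: "\<beta> > 0" "\<beta> * f' \<beta> - f \<beta> = 0" "\<forall>x>0. x * f' x - f x = 0 \<longrightarrow> x = \<beta>"
    and beta_K: "(real K - 1) * \<beta> < 1"
    and x0: "\<exists>x0. 0 < x0 \<and> x0 < 1 / (real K - 1) \<and>
               (\<forall>x. 0 < x \<and> x < x0 \<longrightarrow> f'' x / f' x - 2 * (real K - 1) / (1 - (real K - 1) * x) > 0) \<and>
               (\<forall>x. x0 < x \<and> x < 1 / (real K - 1) \<longrightarrow> f'' x / f' x - 2 * (real K - 1) / (1 - (real K - 1) * x) < 0)"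
    and gamma: "0 < \<gamma>" "\<gamma> < 1 / (real K - 1)"
               "\<gamma> * (1 - (real K - 1) * \<gamma>) * f' \<gamma> - f \<gamma> = 0"
               "\<forall>x. 0 < x \<and> x < 1 / (real K - 1) \<and> x * (1 - (real K - 1) * x) * f' x - f x = 0 \<longrightarrow> x = \<gamma>"
    and pow_nash: "\<forall>i<K. \<forall>h. \<eta>min i \<le> h \<and> h \<le> \<eta>max i \<longrightarrow>
                     0 \<le> \<sigma>2 / h * (\<beta> / (1 - (real K - 1) * \<beta>)) \<and> \<sigma>2 / h * (\<beta> / (1 - (real K - 1) * \<beta>)) \<le> Pmax i"
    and pow_op: "\<forall>i<K. \<forall>h. \<eta>min i \<le> h \<and> h \<le> \<eta>max i \<longrightarrow>
                     0 \<le> \<sigma>2 / h * (\<gamma> / (1 - (real K - 1) * \<gamma>)) \<and> \<sigma>2 / h * (\<gamma> / (1 - (real K - 1) * \<gamma>)) \<le> Pmax i"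
    and lam: "0 < lam" "lam < 1"
    and lam_bound: "\<forall>i<K. let \<delta> = (1 - (real K - 1) * \<gamma>) / \<gamma> * f \<gamma> - (1 - (real K - 1) * \<beta>) / \<beta> * f \<beta>
                      in lam \<le> \<eta>min i * \<delta> / (\<eta>min i * \<delta> + \<eta>max i * ((real K - 1) * f \<beta> - \<delta>))"
  shows "subgame_perfect K \<sigma>2 f R Pmax \<eta>min \<eta>max lam (trigger K \<sigma>2 \<beta> \<gamma>)"
  proof -
  have fb: "f \<beta> > 0" and fmax: "\<And>x. x > 0 \<Longrightarrow> f x / x \<le> f \<beta> / \<beta>"
    using ratio_max[OF sig d1 d2 beta] by auto
  have f0: "f 0 = 0" and smono: "strict_mono_on {0..} f" using sig unfolding sigmoidal_def by auto
  have fnn: "f x \<ge> 0" if "x \<ge> 0" for x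
  proof (cases "x = 0")
    case True thus ?thesis using f0 by simp
  next
    case False
    hence "f 0 < f x" using smono that by (intro strict_mono_onD[OF smono]) auto
    thus ?thesis using f0 by simp
  qed
  have K1: "real K - 1 \<ge> 1" using K by simp
  have dpos: "(1 - (real K - 1) * \<gamma>) / \<gamma> * f \<gamma> - (1 - (real K - 1) * \<beta>) / \<beta> * f \<beta> > 0"
    by (rule delta_pos[OF sig d1 d2 K1 beta(1,2) fb beta_K x0 gamma])
  have gK: "(real K - 1) * \<gamma> < 1" using gamma(2) K1 by (simp add: field_simps)
  show ?thesis
    unfolding subgame_perfect_def
  proof (intro conjI allI impI)
    fix i assume i: "i < K"
    show "valid_strategy Pmax \<eta>min \<eta>max i (trigger K \<sigma>2 \<beta> \<gamma> i)"
      unfolding valid_strategy_def trigger_def using pow_nash pow_op i by auto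
  next
    fix G n q i s
    assume G: "admissible_gains K \<eta>min \<eta>max G" and i: "i < K"
      and s: "valid_strategy Pmax \<eta>min \<eta>max i s"
    show "payoff K \<sigma>2 f R lam ((trigger K \<sigma>2 \<beta> \<gamma>)(i := s)) G (past_history K \<sigma>2 G q n) i
        \<le> payoff K \<sigma>2 f R lam (trigger K \<sigma>2 \<beta> \<gamma>) G (past_history K \<sigma>2 G q n) i"
    proof (rule game[OF K sigma _ i eta fmax beta(1) fb fnn beta_K gamma(1) gK refl dpos lam _ G s])
      show "R i > 0" using R i by simp
      show "lam \<le> \<eta>min i * ((1 - (real K - 1) * \<gamma>) / \<gamma> * f \<gamma> - (1 - (real K - 1) * \<beta>) / \<beta> * f \<beta>) /
       (\<eta>min i * ((1 - (real K - 1) * \<gamma>) / \<gamma> * f \<gamma> - (1 - (real K - 1) * \<beta>) / \<beta> * f \<beta>) +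
        \<eta>max i * ((real K - 1) * f \<beta> - ((1 - (real K - 1) * \<gamma>) / \<gamma> * f \<gamma> - (1 - (real K - 1) * \<beta>) / \<beta> * f \<beta>)))"
        using lam_bound i unfolding Let_def by blast
    qed
  qed
qed

end
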